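(* Define $H:\mathbb{N}^+\cup\{\bot\}\to\mathbb{N}^+\cup\{\bot\}$ by $H(\bot)=\bot$, $H(n)=3n/4$ if $n\equiv0\pmod4$, $H(n)=(9n+1)/8$ if $n\equiv7\pmod 8$, and $H(n)=\bot$ otherwise. Then every $H$-trajectory $(n,H(n),H^2(n),\dots)$ with $n\in\mathbb{N}^+$ contains $\bot$ if and only if every Collatz trajectory that does not contain $1$ contains some element $m$ with $m\equiv5\pmod8$ or $m\equiv7\pmod8$.
   Context: $C:\mathbb{N}^+\to\mathbb{N}^+$ is the Collatz function $C(n)=n/2$ for $n$ even and $C(n)=3n+1$ for $n$ odd; the Collatz trajectory of $n$ is $(n,C(n),C^2(n),\dots)$. *)

theory Defs
  imports Main
begin

text \<open>Collatz function on positive naturals (value at 0 is irrelevant; we only apply it to n > 0).\<close>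
definition collatz :: "nat \<Rightarrow> nat" where
  "collatz n = (if even n then n div 2 else 3 * n + 1)"

fun H :: "nat option \<Rightarrow> nat option" where
  "H None = None"
| "H (Some n) =
     (if n mod 4 = 0 then Some (3 * n div 4)
      else if n mod 8 = 7 then Some ((9 * n + 1) div 8)
      else None)"

end

theory Submission
  imports Defs
begin

lemma lin: "(c*p+d) mod (m::nat) = (c*(p mod m)+d) mod m"
  by (metis mod_add_left_eq mod_mult_right_eq)

lemma m48: "(p::nat) mod 4 = (p mod 8) mod 4"
  by (simp add: mod_mod_cancel)

lemma divex: "(x::nat) mod m = 0 \<Longrightarrow> m * (x div m) = x"
  using mult_div_mod_eq[of m x] by simp

lemma c8: "(r::nat) < 8 \<Longrightarrow> r=0\<or>r=1\<or>r=2\<or>r=3\<or>r=4\<or>r=5\<or>r=6\<or>r=7" by arith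

lemma mod8_odd: "(x::nat) mod 8 = 5 \<or> x mod 8 = 7 \<Longrightarrow> odd x"
proof -
  assume a: "x mod 8 = 5 \<or> x mod 8 = 7"
  have e: "x mod 2 = (x mod 8) mod 2" by (simp add: mod_mod_cancel)
  from a have "x mod 2 = 1" using e by auto
  then show ?thesis by (simp add: odd_iff_mod_2_eq_one)
qed

lemma f1: "(p::nat) mod 8 = 7 \<Longrightarrow> (6*p+1) mod 8 = 3"
proof - assume a: "p mod 8 = 7" show ?thesis using lin[of 6 p 1 8, unfolded a] by simp qed

lemma f2: "(p::nat) mod 8 = 7 \<Longrightarrow> 8*((9*p+1) div 8) + 1 = 9*p+2"
proof - assume a: "p mod 8 = 7" have "(9*p+1) mod 8 = 0" using lin[of 9 p 1 8, unfolded a] by simp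
  from divex[OF this] show ?thesis by simp qed

lemma f3: "(p::nat) mod 8 = 7 \<Longrightarrow> p mod 4 \<noteq> 0"
proof - assume a: "p mod 8 = 7" show ?thesis using m48[of p, unfolded a] by simp qed

lemma f4: "(p::nat) mod 4 = 0 \<Longrightarrow> 8*(3*p div 4) + 1 = 6*p+1"
proof - assume a: "p mod 4 = 0" have "(3*p+0) mod 4 = 0" using lin[of 3 p 0 4, unfolded a] by simp
  from divex[OF this] show ?thesis by simp qed

lemma f5: "(p::nat) mod 4 = 0 \<Longrightarrow> p > 0 \<Longrightarrow> 3*p div 4 > 0"
proof -
  assume a: "p mod 4 = 0" and p: "p > 0"
  have e: "8*(3*p div 4) + 1 = 6*p+1" by (rule f4[OF a])
  show ?thesis
  proof (rule ccontr)
    assume "\<not> 3*p div 4 > 0"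
    then have "3*p div 4 = 0" by simp
    then show False using e p by simp
  qed
qed

lemma f6: "(p::nat) mod 8 = 7 \<Longrightarrow> (9*p+1) div 8 > 0"
proof -
  assume a: "p mod 8 = 7"
  have e: "8*((9*p+1) div 8) + 1 = 9*p+2" by (rule f2[OF a])
  show ?thesis
  proof (rule ccontr)
    assume "\<not> (9*p+1) div 8 > 0"
    then have "(9*p+1) div 8 = 0" by simp
    then show False using e by simp
  qed
qed

definition G :: "nat \<Rightarrow> bool" where
  "G p \<longleftrightarrow> p > 0 \<and> (\<forall>k. (H ^^ k) (Some p) \<noteq> None)"

lemma G_step:
  assumes "G p"
  shows "(p mod 4 = 0 \<and> G (3 * p div 4)) \<or> (p mod 8 = 7 \<and> G ((9 * p + 1) div 8))"
proof -
  have p0: "p > 0" and all: "\<And>k. (H ^^ k) (Some p) \<noteq> None" using assms by (auto simp: G_def)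
  have sh: "\<And>k. (H ^^ k) (H (Some p)) \<noteq> None"
    using all by (metis comp_apply funpow_Suc_right)
  have "H (Some p) \<noteq> None" using all[of 1] by simp
  then consider "p mod 4 = 0" | "p mod 4 \<noteq> 0" "p mod 8 = 7" by (auto split: if_splits)
  then show ?thesis
  proof cases
    case 1
    then have "H (Some p) = Some (3 * p div 4)" by simp
    moreover have "3 * p div 4 > 0" by (rule f5[OF 1 p0])
    ultimately show ?thesis using sh 1 by (auto simp: G_def)
  next
    case 2
    then have "H (Some p) = Some ((9 * p + 1) div 8)" by simp
    moreover have "(9 * p + 1) div 8 > 0" by (rule f6[OF 2(2)])
    ultimately show ?thesis using sh 2 by (auto simp: G_def)
  qed
qed

definition good :: "nat \<Rightarrow> bool" where
  "good x \<longleftrightarrow> (\<exists>p. G p \<and> (x = 8*p+1 \<or> x = 24*p+4 \<or> x = 12*p+2 \<or>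
      (p mod 8 = 7 \<and> (x = 6*p+1 \<or> x = 18*p+4))))"

lemma good_step:
  assumes "good x" shows "good (collatz x)"
proof -
  obtain p where Gp: "G p" and cs: "x = 8*p+1 \<or> x = 24*p+4 \<or> x = 12*p+2 \<or>
      (p mod 8 = 7 \<and> (x = 6*p+1 \<or> x = 18*p+4))" using assms good_def by blast
  from cs consider "x = 8*p+1" | "x = 24*p+4" | "x = 12*p+2" | "p mod 8 = 7" "x = 6*p+1"
    | "p mod 8 = 7" "x = 18*p+4" by blast
  then show ?thesis
  proof cases
    case 1
    then have "collatz x = 24*p+4" by (simp add: collatz_def)
    then show ?thesis using Gp good_def by blast
  next
    case 2
    then have "collatz x = 12*p+2" by (simp add: collatz_def)
    then show ?thesis using Gp good_def by blast
  next
    case 3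
    then have c: "collatz x = 6*p+1" by (simp add: collatz_def)
    from G_step[OF Gp] show ?thesis
    proof
      assume a: "p mod 4 = 0 \<and> G (3 * p div 4)"
      have "p mod 4 = 0" using a by blast
      then have "collatz x = 8 * (3 * p div 4) + 1" using c f4 by simp
      then show ?thesis using a good_def by blast
    next
      assume a: "p mod 8 = 7 \<and> G ((9 * p + 1) div 8)"
      then show ?thesis using c Gp good_def by blast
    qed
  next
    case 4
    then have "collatz x = 18*p+4" by (simp add: collatz_def)
    then show ?thesis using Gp 4 good_def by blast
  next
    case 5
    then have c: "collatz x = 9*p+2" by (simp add: collatz_def)
    have "\<not> (p mod 4 = 0)" using 5 f3 by blast
    then have a: "G ((9 * p + 1) div 8)" using G_step[OF Gp] by auto
    have "collatz x = 8 * ((9 * p + 1) div 8) + 1" using c 5 f2 by simp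
    then show ?thesis using a good_def by blast
  qed
qed

lemma good_prop:
  assumes "good x" shows "x \<noteq> 1 \<and> x mod 8 \<noteq> 5 \<and> x mod 8 \<noteq> 7"
proof -
  obtain p where Gp: "G p" and cs: "x = 8*p+1 \<or> x = 24*p+4 \<or> x = 12*p+2 \<or>
      (p mod 8 = 7 \<and> (x = 6*p+1 \<or> x = 18*p+4))" using assms good_def by blast
  have p0: "p > 0" using Gp G_def by blast
  from cs consider "x = 8*p+1" | "x = 24*p+4" | "x = 12*p+2" | "p mod 8 = 7" "x = 6*p+1"
    | "p mod 8 = 7" "x = 18*p+4" by blast
  then show ?thesis
  proof cases
    case 1
    have "x = 1 + 8*p" using 1 by simp
    then have "x mod 8 = 1" using mod_mult_self2[of 1 8 p] by simp
    then show ?thesis using 1 p0 by simp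
  next
    case 2
    then have "even x" by simp
    then show ?thesis using mod8_odd[of x] by auto
  next
    case 3
    then have "even x" by simp
    then show ?thesis using mod8_odd[of x] by auto
  next
    case 4
    then have "x mod 8 = 3" using f1 by simp
    then show ?thesis using 4 p0 by simp
  next
    case 5
    then have "even x" by simp
    then show ?thesis using mod8_odd[of x] by auto
  qed
qed

lemma good_iter: "good x \<Longrightarrow> good ((collatz ^^ k) x)"
  by (induction k) (auto intro: good_step)

definition P :: "nat \<Rightarrow> bool" where
  "P x \<longleftrightarrow> x > 0 \<and> (\<forall>k. (collatz ^^ k) x \<noteq> 1 \<and> (collatz ^^ k) x mod 8 \<noteq> 5 \<and> (collatz ^^ k) x mod 8 \<noteq> 7)"

lemma collatz_pos: "x > 0 \<Longrightarrow> collatz x > 0"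
  by (cases "even x") (auto simp: collatz_def elim!: evenE)

lemma collatz_iter_pos: "x > 0 \<Longrightarrow> (collatz ^^ k) x > 0"
  by (induction k) (auto simp: collatz_pos)

lemma iter_add: "(collatz ^^ k) ((collatz ^^ j) x) = (collatz ^^ (k + j)) x"
  by (simp add: funpow_add)

lemma P_shift: "P x \<Longrightarrow> P ((collatz ^^ j) x)"
  unfolding P_def using collatz_iter_pos iter_add by simp

lemma ce: "collatz (2*k) = k" by (simp add: collatz_def)
lemma co: "collatz (2*k+1) = 6*k+4" by (simp add: collatz_def)
lemma it2: "(f ^^ 2) x = f (f x)" by (simp add: numeral_2_eq_2)
lemma it3: "(f ^^ 3) x = f (f (f x))" by (simp add: numeral_3_eq_3)
lemma it5: "(f ^^ 5) x = f (f (f (f (f x))))" by (simp add: eval_nat_numeral)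

lemma P_odd: "P x \<Longrightarrow> \<exists>j. odd ((collatz ^^ j) x)"
proof (induction x rule: less_induct)
  case (less x)
  show ?case
  proof (cases "odd x")
    case True
    then have "odd ((collatz ^^ 0) x)" by simp
    then show ?thesis by blast
  next
    case False
    have x0: "x > 0" using less.prems P_def by blast
    have cx: "collatz x = x div 2" using False by (simp add: collatz_def)
    have "P ((collatz ^^ 1) x)" using P_shift less.prems by blast
    then have "P (collatz x)" by simp
    moreover have "collatz x < x" using cx x0 by simp
    ultimately obtain j where "odd ((collatz ^^ j) (collatz x))" using less.IH by blast
    moreover have "(collatz ^^ Suc j) x = (collatz ^^ j) (collatz x)"
      by (metis comp_apply funpow_Suc_right)
    ultimately have "odd ((collatz ^^ Suc j) x)" by simp
    then show ?thesis by blast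
  qed
qed

lemma P_at: "P x \<Longrightarrow> (collatz ^^ k) x \<noteq> 1 \<and> (collatz ^^ k) x mod 8 \<noteq> 5 \<and> (collatz ^^ k) x mod 8 \<noteq> 7"
  unfolding P_def by blast

lemma P_start: "P x \<Longrightarrow> \<exists>j p. p > 0 \<and> (collatz ^^ j) x = 8*p+1"
proof -
  assume Px: "P x"
  obtain j where o: "odd ((collatz ^^ j) x)" using P_odd Px by blast
  define y where "y = (collatz ^^ j) x"
  have Py: "P y" using P_shift Px y_def by blast
  have y1: "y \<noteq> 1" "y mod 8 \<noteq> 5" "y mod 8 \<noteq> 7" using P_at[OF Py, of 0] by simp_all
  have oy: "odd y" using o y_def by simp
  define q where "q = y div 8"
  define r where "r = y mod 8"
  have yqr: "y = 8*q + r" unfolding q_def r_def by simp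
  have r8: "r < 8" unfolding r_def by simp
  have m2: "y mod 2 = r mod 2" unfolding r_def by (simp add: mod_mod_cancel)
  have ro: "odd r" using oy m2 by (simp add: odd_iff_mod_2_eq_one)
  from c8[OF r8] ro y1 consider "r = 1" | "r = 3" unfolding r_def by auto
  then show ?thesis
  proof cases
    case 1
    have "q > 0"
    proof (rule ccontr)
      assume "\<not> q > 0" then have "q = 0" by simp
      then show False using yqr 1 y1 by simp
    qed
    moreover have "(collatz ^^ j) x = 8*q+1" using yqr 1 y_def by simp
    ultimately show ?thesis by blast
  next
    case 2
    have y3: "y = 2*(4*q+1)+1" using yqr 2 by simp
    have c2: "(collatz ^^ 2) y = 12*q+5"
    proof -
      have h: "collatz y = 2*(12*q+5)" using y3 co[of "4*q+1"] by simp
      have "collatz (collatz y) = collatz (2*(12*q+5))" by (simp only: h)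
      also have "\<dots> = 12*q+5" by (rule ce)
      finally have "collatz (collatz y) = 12*q+5" .
      then show ?thesis by (simp add: it2)
    qed
    have z: "(collatz ^^ 2) y mod 8 \<noteq> 5" using P_at[OF Py] by blast
    have eq: "(collatz ^^ 2) y = (collatz ^^ (2 + j)) x"
      using y_def iter_add by simp
    show ?thesis
    proof (cases "even q")
      case True
      then obtain b where "q = 2*b" by (auto elim: evenE)
      then have "(collatz ^^ 2) y = 5 + 8*(3*b)" using c2 by simp
      then have "(collatz ^^ 2) y mod 8 = 5" using mod_mult_self2[of 5 8 "3*b"] by simp
      then show ?thesis using z by simp
    next
      case False
      then obtain b where "q = 2*b+1" by (auto elim: oddE)
      then have "(collatz ^^ 2) y = 8*(3*b+2)+1" using c2 by simp
      then have "(collatz ^^ (2 + j)) x = 8*(3*b+2)+1" using eq by simp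
      then show ?thesis by (metis zero_less_Suc add_2_eq_Suc')
    qed
  qed
qed

lemma P_H_step:
  assumes PP: "P (8*p+1)" and p0: "p > 0"
  shows "\<exists>q. H (Some p) = Some q \<and> q > 0 \<and> P (8*q+1)"
proof -
  have c3: "(collatz ^^ 3) (8*p+1) = 6*p+1"
  proof -
    have a: "collatz (8*p+1) = 2*(2*(6*p+1))" using co[of "4*p"] by simp
    have b: "collatz (2*(2*(6*p+1))) = 2*(6*p+1)" by (rule ce)
    show ?thesis by (simp only: it3 a b ce)
  qed
  have r3: "(6*p+1) mod 8 \<noteq> 5" "(6*p+1) mod 8 \<noteq> 7"
    using P_at[OF PP, of 3] unfolding c3 by simp_all
  have r8: "p mod 8 < 8" by simp
  from c8[OF r8] consider "p mod 8 = 0" | "p mod 8 = 1" | "p mod 8 = 2" | "p mod 8 = 3"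
    | "p mod 8 = 4" | "p mod 8 = 5" | "p mod 8 = 6" | "p mod 8 = 7" by auto
  then show ?thesis
  proof cases
    case 1
    have m4: "p mod 4 = 0" using m48[of p, unfolded 1] by simp
    then have "H (Some p) = Some (3*p div 4)" by simp
    moreover have "3*p div 4 > 0" by (rule f5[OF m4 p0])
    moreover have "8 * (3*p div 4) + 1 = (collatz ^^ 3) (8*p+1)" using c3 f4[OF m4] by simp
    ultimately show ?thesis using P_shift[OF PP, of 3] by metis
  next
    case 5
    have m4: "p mod 4 = 0" using m48[of p, unfolded 5] by simp
    then have "H (Some p) = Some (3*p div 4)" by simp
    moreover have "3*p div 4 > 0" by (rule f5[OF m4 p0])
    moreover have "8 * (3*p div 4) + 1 = (collatz ^^ 3) (8*p+1)" using c3 f4[OF m4] by simp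
    ultimately show ?thesis using P_shift[OF PP, of 3] by metis
  next
    case 2
    have "(6*p+1) mod 8 = 7" using lin[of 6 p 1 8, unfolded 2] by simp
    then show ?thesis using r3 by simp
  next
    case 3
    have "(6*p+1) mod 8 = 5" using lin[of 6 p 1 8, unfolded 3] by simp
    then show ?thesis using r3 by simp
  next
    case 6
    have "(6*p+1) mod 8 = 7" using lin[of 6 p 1 8, unfolded 6] by simp
    then show ?thesis using r3 by simp
  next
    case 7
    have "(6*p+1) mod 8 = 5" using lin[of 6 p 1 8, unfolded 7] by simp
    then show ?thesis using r3 by simp
  next
    case 4
    have "p mod 2 = 1" using mod_mod_cancel[of 2 8 p] 4 by simp
    then obtain k where pk: "p = 2*k+1" by (metis odd_iff_mod_2_eq_one oddE)
    have c5: "(collatz ^^ 5) (8*p+1) = 9*p+2"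
    proof -
      have a: "collatz (8*p+1) = 2*(2*(6*p+1))" using co[of "4*p"] by simp
      have b: "6*p+1 = 2*(3*p)+1" by simp
      have d: "collatz (2*(3*p)+1) = 2*(9*p+2)" using co[of "3*p"] by simp
      show ?thesis by (simp only: it5 a ce b d)
    qed
    have "(9*p+2) mod 8 = 5" using lin[of 9 p 2 8, unfolded 4] by simp
    then show ?thesis using P_at[OF PP, of 5] c5 by simp
  next
    case 8
    have m4: "p mod 4 \<noteq> 0" by (rule f3[OF 8])
    have c5: "(collatz ^^ 5) (8*p+1) = 9*p+2"
    proof -
      have a: "collatz (8*p+1) = 2*(2*(6*p+1))" using co[of "4*p"] by simp
      have b: "6*p+1 = 2*(3*p)+1" by simp
      have d: "collatz (2*(3*p)+1) = 2*(9*p+2)" using co[of "3*p"] by simp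
      show ?thesis by (simp only: it5 a ce b d)
    qed
    have "H (Some p) = Some ((9*p+1) div 8)" using m4 8 by simp
    moreover have "(9*p+1) div 8 > 0" by (rule f6[OF 8])
    moreover have "8 * ((9*p+1) div 8) + 1 = (collatz ^^ 5) (8*p+1)" using c5 f2[OF 8] by simp
    ultimately show ?thesis using P_shift[OF PP, of 5] by metis
  qed
qed

lemma P_H_iter:
  assumes "P (8*p+1)" "p > 0"
  shows "\<exists>q. (H ^^ k) (Some p) = Some q \<and> q > 0 \<and> P (8*q+1)"
proof (induction k)
  case 0 then show ?case using assms by simp
next
  case (Suc k)
  then obtain q where "(H ^^ k) (Some p) = Some q" "q > 0" "P (8*q+1)" by blast
  then show ?case using P_H_step by auto
qed

theorem mainTheorem18:
  shows "(\<forall>n::nat. n > 0 \<longrightarrow> (\<exists>k. (H ^^ k) (Some n) = None)) \<longleftrightarrow>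
         (\<forall>n::nat. n > 0 \<longrightarrow> (\<forall>k. (collatz ^^ k) n \<noteq> 1) \<longrightarrow>
            (\<exists>k. (collatz ^^ k) n mod 8 = 5 \<or> (collatz ^^ k) n mod 8 = 7))"
proof
  assume A: "\<forall>n::nat. n > 0 \<longrightarrow> (\<exists>k. (H ^^ k) (Some n) = None)"
  show "\<forall>n::nat. n > 0 \<longrightarrow> (\<forall>k. (collatz ^^ k) n \<noteq> 1) \<longrightarrow>
            (\<exists>k. (collatz ^^ k) n mod 8 = 5 \<or> (collatz ^^ k) n mod 8 = 7)"
  proof (intro allI impI, rule ccontr)
    fix n :: nat
    assume "n > 0" "\<forall>k. (collatz ^^ k) n \<noteq> 1"
      "\<not> (\<exists>k. (collatz ^^ k) n mod 8 = 5 \<or> (collatz ^^ k) n mod 8 = 7)"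
    then have "P n" by (auto simp: P_def)
    then obtain j p where jp: "p > 0" "(collatz ^^ j) n = 8*p+1" using P_start by blast
    have "P ((collatz ^^ j) n)" using \<open>P n\<close> P_shift by blast
    then have "P (8*p+1)" using jp by simp
    then have "\<forall>k. (H ^^ k) (Some p) \<noteq> None" using P_H_iter jp(1) by fastforce
    then show False using A jp(1) by blast
  qed
next
  assume B: "\<forall>n::nat. n > 0 \<longrightarrow> (\<forall>k. (collatz ^^ k) n \<noteq> 1) \<longrightarrow>
            (\<exists>k. (collatz ^^ k) n mod 8 = 5 \<or> (collatz ^^ k) n mod 8 = 7)"
  show "\<forall>n::nat. n > 0 \<longrightarrow> (\<exists>k. (H ^^ k) (Some n) = None)"
  proof (intro allI impI, rule ccontr)
    fix n :: nat
    assume "n > 0" "\<not> (\<exists>k. (H ^^ k) (Some n) = None)"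
    then have "G n" by (auto simp: G_def)
    then have "good (8*n+1)" using good_def by blast
    then have "\<forall>k. (collatz ^^ k) (8*n+1) \<noteq> 1 \<and> (collatz ^^ k) (8*n+1) mod 8 \<noteq> 5
        \<and> (collatz ^^ k) (8*n+1) mod 8 \<noteq> 7" using good_iter good_prop by blast
    then show False using B[rule_format, of "8*n+1"] by auto
  qed
qed

end
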